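(* Let $\overline S(U)=\inf_{\theta\in\mathbb R^n}\{\Phi(\theta)+\sum_{j=1}^n\theta_jU_j\}$. Then $S(U)=\overline S(U)$ for every $U$ for which $S(U)$ is defined.
   Context: Let $A$ be a finite or countable set, $\mathcal M_1^+(A)$ the probability distributions on $A$, $I(p)=\sum_a h_a(p_a)$ a generalised entropy (each $h_a:[0,1]\to\mathbb R$ continuous, strictly concave, $h_a(0)=h_a(1)=0$), $H_1,\dots,H_n:A\to\mathbb R$ bounded below, $\langle p,X\rangle=\sum_ap_aX(a)$. $p^*$ satisfies the variational principle with parameters $\theta\in\mathbb R^n$ if $+\infty>I(p^* )-\sum_j\theta_j\langle p^*,H_j\rangle\ge I(p)-\sum_j\theta_j\langle p,H_j\rangle$ for all $p\in\mathcal M_1^+(A)$. Let $\mathcal D$ be the set of $\theta\in\mathbb R^n$ for which such $p^*$ exists (it is unique), denoted $p_\theta$. For $U\in\mathbb R^n$ of the form $U_j=\langle p_\eta,H_j\rangle$ ($j=1,\dots,n$) for some $\eta\in\mathcal D$, define the thermodynamic entropy $S(U)=I(p_\eta)$ (independent of the choice of $\eta$). The Massieu function is $\Phi(\theta)=\sup_U\{S(U)-\sum_j\theta_jU_j\}$ for $\theta\in\mathbb R^n$, the supremum over all $U$ for which $S(U)$ is defined. *)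

theory Defs
  imports "HOL-Analysis.Analysis"
begin

text \<open>Setting: A is the (finite or countable) type 'a::countable; parameters indexed by
  a finite type 'n (so theta ranges over real^'n, i.e. R^n with n = CARD('n)).
  h a is the entropy contribution of the point a, H j the j-th observable.\<close>

definition strictly_concave_on :: "real set \<Rightarrow> (real \<Rightarrow> real) \<Rightarrow> bool" where
  "strictly_concave_on S f \<longleftrightarrow>
     (\<forall>x\<in>S. \<forall>y\<in>S. x \<noteq> y \<longrightarrow> (\<forall>t. 0 < t \<and> t < 1 \<longrightarrow>
        f ((1 - t) * x + t * y) > (1 - t) * f x + t * f y))"

definition gen_entropy_fun :: "('a \<Rightarrow> real \<Rightarrow> real) \<Rightarrow> bool" where
  "gen_entropy_fun h \<longleftrightarrow> (\<forall>a. continuous_on {0..1} (h a) \<and> strictly_concave_on {0..1} (h a)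
      \<and> h a 0 = 0 \<and> h a 1 = 0)"

definition prob_dists :: "('a::countable \<Rightarrow> real) set" where
  "prob_dists = {p. (\<forall>a. 0 \<le> p a) \<and> (p has_sum 1) UNIV}"

definition gen_entropy :: "('a \<Rightarrow> real \<Rightarrow> real) \<Rightarrow> ('a \<Rightarrow> real) \<Rightarrow> ereal" where
  "gen_entropy h p = enn2ereal (\<Sum>\<^sub>\<infinity>a. ennreal (h a (p a)))"

text \<open>Pairing <p,X> = sum_a p_a X(a) as an extended real: positive part minus negative part
  (the negative part is finite when X is bounded below).\<close>
definition pairing :: "('a \<Rightarrow> real) \<Rightarrow> ('a \<Rightarrow> real) \<Rightarrow> ereal" where
  "pairing p X = enn2ereal (\<Sum>\<^sub>\<infinity>a. ennreal (p a * X a)) - enn2ereal (\<Sum>\<^sub>\<infinity>a. ennreal (- (p a * X a)))"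

definition vterm :: "('n \<Rightarrow> 'a \<Rightarrow> real) \<Rightarrow> real^'n \<Rightarrow> ('a \<Rightarrow> real) \<Rightarrow> 'n \<Rightarrow> ereal" where
  "vterm H \<theta> p j = ereal (- (\<theta> $ j)) * pairing p (H j)"

definition free_fun :: "('a \<Rightarrow> real \<Rightarrow> real) \<Rightarrow> ('n::finite \<Rightarrow> 'a \<Rightarrow> real) \<Rightarrow> real^'n \<Rightarrow> ('a \<Rightarrow> real) \<Rightarrow> ereal" where
  "free_fun h H \<theta> p = gen_entropy h p + (\<Sum>j\<in>UNIV. vterm H \<theta> p j)"

text \<open>The functional is well defined (no +infinity - infinity conflict).\<close>
definition free_defined :: "('a \<Rightarrow> real \<Rightarrow> real) \<Rightarrow> ('n::finite \<Rightarrow> 'a \<Rightarrow> real) \<Rightarrow> real^'n \<Rightarrow> ('a \<Rightarrow> real) \<Rightarrow> bool" where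
  "free_defined h H \<theta> p \<longleftrightarrow>
     \<not> ((gen_entropy h p = \<infinity> \<or> (\<exists>j. vterm H \<theta> p j = \<infinity>)) \<and> (\<exists>j. vterm H \<theta> p j = - \<infinity>))"

definition var_principle :: "('a::countable \<Rightarrow> real \<Rightarrow> real) \<Rightarrow> ('n::finite \<Rightarrow> 'a \<Rightarrow> real) \<Rightarrow> real^'n \<Rightarrow> ('a \<Rightarrow> real) \<Rightarrow> bool" where
  "var_principle h H \<theta> q \<longleftrightarrow> q \<in> prob_dists \<and> free_defined h H \<theta> q \<and> free_fun h H \<theta> q < \<infinity> \<and>
     (\<forall>p\<in>prob_dists. free_defined h H \<theta> p \<longrightarrow> free_fun h H \<theta> p \<le> free_fun h H \<theta> q)"

definition param_domain :: "('a::countable \<Rightarrow> real \<Rightarrow> real) \<Rightarrow> ('n::finite \<Rightarrow> 'a \<Rightarrow> real) \<Rightarrow> (real^'n) set" where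
  "param_domain h H = {\<theta>. \<exists>q. var_principle h H \<theta> q}"

definition equil :: "('a::countable \<Rightarrow> real \<Rightarrow> real) \<Rightarrow> ('n::finite \<Rightarrow> 'a \<Rightarrow> real) \<Rightarrow> real^'n \<Rightarrow> ('a \<Rightarrow> real)" where
  "equil h H \<theta> = (THE q. var_principle h H \<theta> q)"

definition represents :: "('a::countable \<Rightarrow> real \<Rightarrow> real) \<Rightarrow> ('n::finite \<Rightarrow> 'a \<Rightarrow> real) \<Rightarrow> real^'n \<Rightarrow> real^'n \<Rightarrow> bool" where
  "represents h H \<eta> U \<longleftrightarrow> \<eta> \<in> param_domain h H \<and> (\<forall>j. pairing (equil h H \<eta>) (H j) = ereal (U $ j))"

definition S_dom :: "('a::countable \<Rightarrow> real \<Rightarrow> real) \<Rightarrow> ('n::finite \<Rightarrow> 'a \<Rightarrow> real) \<Rightarrow> (real^'n) set" where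
  "S_dom h H = {U. \<exists>\<eta>. represents h H \<eta> U}"

definition thermo_entropy :: "('a::countable \<Rightarrow> real \<Rightarrow> real) \<Rightarrow> ('n::finite \<Rightarrow> 'a \<Rightarrow> real) \<Rightarrow> real^'n \<Rightarrow> ereal" where
  "thermo_entropy h H U = gen_entropy h (equil h H (SOME \<eta>. represents h H \<eta> U))"

definition massieu :: "('a::countable \<Rightarrow> real \<Rightarrow> real) \<Rightarrow> ('n::finite \<Rightarrow> 'a \<Rightarrow> real) \<Rightarrow> real^'n \<Rightarrow> ereal" where
  "massieu h H \<theta> = (SUP U\<in>S_dom h H. thermo_entropy h H U - ereal (\<theta> \<bullet> U))"

definition S_bar :: "('a::countable \<Rightarrow> real \<Rightarrow> real) \<Rightarrow> ('n::finite \<Rightarrow> 'a \<Rightarrow> real) \<Rightarrow> real^'n \<Rightarrow> ereal" where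
  "S_bar h H U = (INF \<theta>. massieu h H \<theta> + ereal (\<theta> \<bullet> U))"

end

theory Submission
  imports Defs
begin


lemma ennreal_max0: "ennreal (max x 0) = ennreal x"
  by (cases "x \<ge> 0") (auto simp: max_def ennreal_neg)

lemma enn_infsum_conv:
  fixes f :: "'a \<Rightarrow> real"
  assumes nn: "\<And>x. 0 \<le> f x" and sm: "f summable_on UNIV"
  shows "(\<Sum>\<^sub>\<infinity>x. ennreal (f x)) = ennreal (\<Sum>\<^sub>\<infinity>x. f x)"
proof -
  have "infsum (ennreal \<circ> f) UNIV = ennreal (infsum f UNIV)"
    by (rule infsum_comm_additive_general) (auto simp: sum_ennreal nn sm intro: continuous_on_ennreal)
  then show ?thesis by (simp add: comp_def)
qed

lemma enn_infsum_fin: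
  fixes f :: "'a \<Rightarrow> real"
  assumes nn: "\<And>x. 0 \<le> f x" and fin: "(\<Sum>\<^sub>\<infinity>x. ennreal (f x)) < \<infinity>"
  shows "f summable_on UNIV"
proof (rule nonneg_bdd_above_summable_on)
  show "bdd_above (sum f ` {F. F \<subseteq> UNIV \<and> finite F})"
  proof (rule bdd_aboveI2)
    fix F :: "'a set" assume F: "F \<in> {F. F \<subseteq> UNIV \<and> finite F}"
    have "ennreal (sum f F) = (\<Sum>x\<in>F. ennreal (f x))" by (simp add: nn)
    also have "\<dots> = (\<Sum>\<^sub>\<infinity>x\<in>F. ennreal (f x))" using F by simp
    also have "\<dots> \<le> (\<Sum>\<^sub>\<infinity>x. ennreal (f x))"
      by (rule infsum_mono_neutral) (auto intro: nonneg_summable_on_complete)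
    finally have le: "ennreal (sum f F) \<le> (\<Sum>\<^sub>\<infinity>x. ennreal (f x))" .
    show "sum f F \<le> enn2real (\<Sum>\<^sub>\<infinity>x. ennreal (f x))"
      using enn2real_mono[OF le fin[unfolded infinity_ennreal_def]] by (simp add: nn sum_nonneg)
  qed
qed (use nn in auto)

lemma pairing_summable:
  fixes f :: "'a \<Rightarrow> real"
  assumes sm: "f summable_on UNIV"
  shows "enn2ereal (\<Sum>\<^sub>\<infinity>a. ennreal (f a)) - enn2ereal (\<Sum>\<^sub>\<infinity>a. ennreal (- f a)) = ereal (\<Sum>\<^sub>\<infinity>a. f a)"
proof -
  define p where "p = (\<lambda>x. max (f x) 0)"
  define n where "n = (\<lambda>x. max (- f x) 0)"
  have abs: "(\<lambda>x. norm (f x)) summable_on UNIV"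
    using sm summable_on_iff_abs_summable_on_real by blast
  have ps: "p summable_on UNIV"
    by (rule summable_on_comparison_test[OF abs]) (auto simp: p_def)
  have ns: "n summable_on UNIV"
    by (rule summable_on_comparison_test[OF abs]) (auto simp: n_def)
  have e1: "(\<Sum>\<^sub>\<infinity>a. ennreal (f a)) = ennreal (infsum p UNIV)"
    using enn_infsum_conv[of p, OF _ ps] by (simp add: p_def ennreal_max0)
  have e2: "(\<Sum>\<^sub>\<infinity>a. ennreal (- f a)) = ennreal (infsum n UNIV)"
    using enn_infsum_conv[of n, OF _ ns] by (simp add: n_def ennreal_max0)
  have fe: "f = (\<lambda>x. p x + - n x)" by (auto simp: p_def n_def fun_eq_iff max_def)
  have "infsum f UNIV = infsum p UNIV + - infsum n UNIV"
    apply (subst fe) using infsum_add[OF ps summable_on_uminus[THEN iffD2, OF ns]] infsum_uminus[of n UNIV] by simp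
  moreover have "infsum p UNIV \<ge> 0" "infsum n UNIV \<ge> 0"
    by (auto intro!: infsum_nonneg simp: p_def n_def)
  ultimately show ?thesis unfolding e1 e2 by simp
qed

lemma pairing_fin_summable:
  fixes f :: "'a \<Rightarrow> real"
  assumes "(\<Sum>\<^sub>\<infinity>a. ennreal (f a)) < \<infinity>" "(\<Sum>\<^sub>\<infinity>a. ennreal (- f a)) < \<infinity>"
  shows "f summable_on UNIV"
proof -
  have ps: "(\<lambda>x. max (f x) 0) summable_on UNIV"
    by (rule enn_infsum_fin) (use assms in \<open>auto simp: ennreal_max0\<close>)
  have ns: "(\<lambda>x. max (- f x) 0) summable_on UNIV"
    by (rule enn_infsum_fin) (use assms in \<open>auto simp: ennreal_max0\<close>)
  have fe: "f = (\<lambda>x. max (f x) 0 + - max (- f x) 0)" by (auto simp: fun_eq_iff max_def)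
  show ?thesis apply (subst fe) using summable_on_add[OF ps summable_on_uminus[THEN iffD2, OF ns]] by simp
qed

lemma prob_le1: assumes "q \<in> prob_dists" shows "0 \<le> q a" "q a \<le> 1"
proof -
  show "0 \<le> q a" using assms by (auto simp: prob_dists_def)
  have hs: "(q has_sum 1) UNIV" using assms by (auto simp: prob_dists_def)
  have "(q has_sum (sum q {a})) {a}" by (rule has_sum_finite) simp
  then show "q a \<le> 1"
    using has_sum_mono2[OF _ hs, of "{a}"] assms by (auto simp: prob_dists_def)
qed

lemma prob_summable: assumes "q \<in> prob_dists" shows "q summable_on UNIV" "infsum q UNIV = 1"
  using assms by (auto simp: prob_dists_def summable_on_def infsumI)

lemma neg_fin:
  assumes q: "q \<in> prob_dists" and b: "bdd_below (range X)"
  shows "(\<Sum>\<^sub>\<infinity>a. ennreal (- (q a * X a))) < \<infinity>"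
proof -
  obtain c where c: "\<And>a. c \<le> X a" using b by (auto simp: bdd_below_def)
  define d where "d = max 0 (- c)"
  have d0: "d \<ge> 0" by (simp add: d_def)
  have le: "- (q a * X a) \<le> q a * d" for a
  proof -
    have "- X a \<le> d" using c[of a] by (simp add: d_def)
    then have "q a * (- X a) \<le> q a * d" using prob_le1(1)[OF q] by (intro mult_left_mono) auto
    then show ?thesis by simp
  qed
  have "(\<Sum>\<^sub>\<infinity>a. ennreal (- (q a * X a))) \<le> (\<Sum>\<^sub>\<infinity>a. ennreal (q a * d))"
    by (rule infsum_mono) (auto intro: ennreal_leI le nonneg_summable_on_complete)
  also have "\<dots> = ennreal (\<Sum>\<^sub>\<infinity>a. q a * d)"
    by (rule enn_infsum_conv) (use prob_le1(1)[OF q] d0 prob_summable[OF q] in \<open>auto intro: summable_on_cmult_left\<close>)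
  also have "\<dots> = ennreal d" using prob_summable[OF q] by (simp add: infsum_cmult_left)
  finally show ?thesis unfolding infinity_ennreal_def using ennreal_less_top[of d] by (rule order.strict_trans1)
qed

lemma pairing_finite_summable:
  assumes q: "q \<in> prob_dists" and b: "bdd_below (range X)" and p: "pairing q X = ereal s"
  shows "(\<lambda>a. q a * X a) summable_on UNIV" "s = (\<Sum>\<^sub>\<infinity>a. q a * X a)"
proof -
  have n: "(\<Sum>\<^sub>\<infinity>a. ennreal (- (q a * X a))) < \<infinity>" by (rule neg_fin[OF q b])
  obtain r where r: "r \<ge> 0" "(\<Sum>\<^sub>\<infinity>a. ennreal (- (q a * X a))) = ennreal r"
    using n unfolding infinity_ennreal_def less_top_ennreal by blast
  have pf: "(\<Sum>\<^sub>\<infinity>a. ennreal (q a * X a)) < \<infinity>"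
  proof (rule ccontr)
    assume "\<not> ?thesis"
    then have "(\<Sum>\<^sub>\<infinity>a. ennreal (q a * X a)) = top" unfolding infinity_ennreal_def using top.not_eq_extremum by blast
    then have "pairing q X = \<infinity>" unfolding pairing_def r(2) using r(1) by simp
    then show False using p by simp
  qed
  show sm: "(\<lambda>a. q a * X a) summable_on UNIV" by (rule pairing_fin_summable[OF pf]) (use n in simp)
  show "s = (\<Sum>\<^sub>\<infinity>a. q a * X a)"
    using pairing_summable[OF sm] p unfolding pairing_def by simp
qed



lemma h_props:
  assumes g: "gen_entropy_fun h"
  shows h_nonneg: "\<And>a t. 0 \<le> t \<Longrightarrow> t \<le> 1 \<Longrightarrow> 0 \<le> h a t"
    and h_mid_strict: "\<And>a x y. 0 \<le> x \<Longrightarrow> x \<le> 1 \<Longrightarrow> 0 \<le> y \<Longrightarrow> y \<le> 1 \<Longrightarrow> x \<noteq> y \<Longrightarrow>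
         (h a x + h a y) / 2 < h a ((x + y) / 2)"
    and h_mid: "\<And>a x y. 0 \<le> x \<Longrightarrow> x \<le> 1 \<Longrightarrow> 0 \<le> y \<Longrightarrow> y \<le> 1 \<Longrightarrow>
         (h a x + h a y) / 2 \<le> h a ((x + y) / 2)"
proof -
  have sc: "\<And>a. strictly_concave_on {0..1} (h a)" and z: "\<And>a. h a 0 = 0" and o: "\<And>a. h a 1 = 0"
    using g by (auto simp: gen_entropy_fun_def)
  show ms: "(h a x + h a y) / 2 < h a ((x + y) / 2)"
    if "0 \<le> x" "x \<le> 1" "0 \<le> y" "y \<le> 1" "x \<noteq> y" for a x y
  proof -
    have "h a ((1 - 1/2) * x + 1/2 * y) > (1 - 1/2) * h a x + 1/2 * h a y"
      using that by (intro sc[of a, unfolded strictly_concave_on_def, rule_format]) auto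
    moreover have "(1 - 1/2) * x + 1/2 * y = (x + y) / 2" by simp
    ultimately have "h a ((x + y) / 2) > (1 - 1/2) * h a x + 1/2 * h a y" by (simp only:)
    then show ?thesis by (simp add: field_simps)
  qed
  show "(h a x + h a y) / 2 \<le> h a ((x + y) / 2)"
    if "0 \<le> x" "x \<le> 1" "0 \<le> y" "y \<le> 1" for a x y
    using ms[of x y a] that by (cases "x = y") auto
  show "0 \<le> h a t" if "0 \<le> t" "t \<le> 1" for a t
  proof (cases "t = 0 \<or> t = 1")
    case True then show ?thesis using z o by auto
  next
    case False
    then have "h a ((1 - t) * 0 + t * 1) > (1 - t) * h a 0 + t * h a 1"
      using that by (intro sc[of a, unfolded strictly_concave_on_def, rule_format]) auto
    then show ?thesis using z o by simp
  qed
qed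

lemma entropy_real:
  assumes g: "gen_entropy_fun h" and q: "q \<in> prob_dists" and fin: "gen_entropy h q \<noteq> \<infinity>"
  shows "(\<lambda>a. h a (q a)) summable_on UNIV" "gen_entropy h q = ereal (\<Sum>\<^sub>\<infinity>a. h a (q a))"
proof -
  have nn: "\<And>a. 0 \<le> h a (q a)" using h_nonneg[OF g] prob_le1[OF q] by auto
  have "(\<Sum>\<^sub>\<infinity>a. ennreal (h a (q a))) \<noteq> top"
    using fin unfolding gen_entropy_def by (metis enn2ereal_top)
  then have lt: "(\<Sum>\<^sub>\<infinity>a. ennreal (h a (q a))) < \<infinity>"
    unfolding infinity_ennreal_def using top.not_eq_extremum by blast
  show sm: "(\<lambda>a. h a (q a)) summable_on UNIV" by (rule enn_infsum_fin[OF nn lt])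
  show "gen_entropy h q = ereal (\<Sum>\<^sub>\<infinity>a. h a (q a))"
    unfolding gen_entropy_def enn_infsum_conv[OF nn sm] using infsum_nonneg[of UNIV "\<lambda>a. h a (q a)"] nn by simp
qed

lemma point_mass:
  assumes g: "gen_entropy_fun h"
  shows "(\<lambda>a. if a = b then 1 else 0::real) \<in> prob_dists"
    "gen_entropy h (\<lambda>a. if a = b then 1 else 0) = 0"
    "pairing (\<lambda>a. if a = b then 1 else 0) X = ereal (X b)"
proof -
  show "(\<lambda>a. if a = b then 1 else 0::real) \<in> prob_dists"
    unfolding prob_dists_def by (auto intro!: has_sum_finite_neutralI[where B="{b}"] split: if_splits)
  have z: "\<And>a. h a 0 = 0" and o: "\<And>a. h a 1 = 0"
    using g by (auto simp: gen_entropy_fun_def)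
  have "(\<lambda>a. ennreal (h a (if a = b then 1 else 0))) = (\<lambda>a. 0)"
    using z o by (auto simp: fun_eq_iff)
  then show "gen_entropy h (\<lambda>a. if a = b then 1 else 0) = 0"
    unfolding gen_entropy_def using enn2ereal_ennreal[of 0] by simp
  have hs: "((\<lambda>a. (if a = b then 1 else 0) * X a) has_sum X b) UNIV"
    by (rule has_sum_finite_neutralI[where B="{b}"]) auto
  show "pairing (\<lambda>a. if a = b then 1 else 0) X = ereal (X b)"
  proof -
    have sm: "(\<lambda>a. (if a = b then 1 else 0) * X a) summable_on UNIV" using hs by (auto simp: summable_on_def)
    show ?thesis unfolding pairing_def using pairing_summable[OF sm] infsumI[OF hs] by simp
  qed
qed

lemma sum_Minf:
  fixes f :: "'b \<Rightarrow> ereal"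
  assumes "finite P" "\<forall>i\<in>P. f i \<noteq> \<infinity>" "i \<in> P" "f i = - \<infinity>"
  shows "sum f P = - \<infinity>"
  using assms
proof (induct P rule: finite_induct)
  case empty then show ?case by simp
next
  case (insert x A)
  have nA: "sum f A \<noteq> \<infinity>" using insert sum_Pinfty[of f A] by auto
  show ?case
  proof (cases "x = i")
    case True
    then show ?thesis using insert nA by (cases "sum f A") auto
  next
    case False
    then have "sum f A = - \<infinity>" using insert by auto
    then show ?thesis using insert by (cases "f x") auto
  qed
qed



lemma F_bounds:
  assumes g: "gen_entropy_fun h" and bdd: "\<forall>j. bdd_below (range (H j))"
    and v: "var_principle h H \<theta> q"
  shows "gen_entropy h q \<noteq> \<infinity>" "\<And>j. \<exists>r. vterm H \<theta> q j = ereal r"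
proof -
  define b :: 'a where "b = undefined"
  define d where "d = (\<lambda>a. if a = b then 1 else 0::real)"
  have dp: "d \<in> prob_dists" "gen_entropy h d = 0" "\<And>X. pairing d X = ereal (X b)"
    using point_mass[OF g, of b] unfolding d_def by auto
  have vd: "\<And>j. vterm H \<theta> d j = ereal (- (\<theta> $ j) * H j b)"
    by (simp add: vterm_def dp(3))
  have dd: "free_defined h H \<theta> d" unfolding free_defined_def using vd dp(2) by simp
  have Fd: "free_fun h H \<theta> d = ereal (\<Sum>j\<in>UNIV. - (\<theta> $ j) * H j b)"
    unfolding free_fun_def using vd dp(2) by simp
  have qp: "q \<in> prob_dists" and qd: "free_defined h H \<theta> q" and qlt: "free_fun h H \<theta> q < \<infinity>"
    and qge: "free_fun h H \<theta> d \<le> free_fun h H \<theta> q"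
    using v dp(1) dd unfolding var_principle_def by blast+
  have I0: "gen_entropy h q \<ge> 0" unfolding gen_entropy_def by (rule enn2ereal_nonneg)
  show nI: "gen_entropy h q \<noteq> \<infinity>"
  proof
    assume "gen_entropy h q = \<infinity>"
    then have "free_fun h H \<theta> q = \<infinity>" unfolding free_fun_def by simp
    then show False using qlt by simp
  qed
  have nP: "vterm H \<theta> q j \<noteq> \<infinity>" for j
  proof
    assume "vterm H \<theta> q j = \<infinity>"
    then have "(\<Sum>j\<in>UNIV. vterm H \<theta> q j) = \<infinity>" unfolding sum_Pinfty by auto
    then have "free_fun h H \<theta> q = \<infinity>" unfolding free_fun_def by simp
    then show False using qlt by simp
  qed
  have nM: "vterm H \<theta> q j \<noteq> - \<infinity>" for j
  proof
    assume "vterm H \<theta> q j = - \<infinity>"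
    then have "(\<Sum>j\<in>UNIV. vterm H \<theta> q j) = - \<infinity>" using sum_Minf[of UNIV "vterm H \<theta> q" j] nP by auto
    then have "free_fun h H \<theta> q = - \<infinity>" unfolding free_fun_def using nI I0 by (cases "gen_entropy h q") auto
    then show False using qge Fd by simp
  qed
  show "\<exists>r. vterm H \<theta> q j = ereal r" for j
    using nP[of j] nM[of j] by (cases "vterm H \<theta> q j") auto
qed

lemma pairing_mid:
  assumes q1: "q1 \<in> prob_dists" and q2: "q2 \<in> prob_dists" and b: "bdd_below (range X)"
    and p1: "pairing q1 X = ereal s1" and p2: "pairing q2 X = ereal s2"
  shows "pairing (\<lambda>a. (q1 a + q2 a) / 2) X = ereal ((s1 + s2) / 2)"
proof -
  have sm1: "(\<lambda>a. q1 a * X a) summable_on UNIV" and e1: "s1 = (\<Sum>\<^sub>\<infinity>a. q1 a * X a)"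
    using pairing_finite_summable[OF q1 b p1] by auto
  have sm2: "(\<lambda>a. q2 a * X a) summable_on UNIV" and e2: "s2 = (\<Sum>\<^sub>\<infinity>a. q2 a * X a)"
    using pairing_finite_summable[OF q2 b p2] by auto
  have fe: "(\<lambda>a. (q1 a + q2 a) / 2 * X a) = (\<lambda>a. (q1 a * X a + q2 a * X a) * (1/2))"
    by (auto simp: fun_eq_iff field_simps)
  have sa: "(\<lambda>a. q1 a * X a + q2 a * X a) summable_on UNIV" by (rule summable_on_add[OF sm1 sm2])
  have sm: "(\<lambda>a. (q1 a + q2 a) / 2 * X a) summable_on UNIV"
    unfolding fe by (rule summable_on_cmult_left[OF sa])
  have "(\<Sum>\<^sub>\<infinity>a. (q1 a + q2 a) / 2 * X a) = (s1 + s2) / 2"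
    unfolding fe infsum_cmult_left[OF sa] infsum_add[OF sm1 sm2] e1 e2 by simp
  then show ?thesis unfolding pairing_def using pairing_summable[OF sm] by simp
qed

lemma var_unique:
  assumes g: "gen_entropy_fun h" and bdd: "\<forall>j. bdd_below (range (H j))"
    and v1: "var_principle h H \<theta> q1" and v2: "var_principle h H \<theta> q2"
  shows "q1 = q2"
proof (rule ccontr)
  assume "q1 \<noteq> q2"
  then obtain a0 where a0: "q1 a0 \<noteq> q2 a0" by auto
  have p1: "q1 \<in> prob_dists" and p2: "q2 \<in> prob_dists"
    using v1 v2 unfolding var_principle_def by blast+
  define m where "m = (\<lambda>a. (q1 a + q2 a) / 2)"
  have pm: "m \<in> prob_dists"
  proof -
    have hs: "((\<lambda>a. q1 a + q2 a) has_sum (1 + 1)) UNIV"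
      using p1 p2 unfolding prob_dists_def by (intro has_sum_add) auto
    have "((\<lambda>a. (q1 a + q2 a) * (1/2)) has_sum ((1 + 1) * (1/2))) UNIV"
      by (rule has_sum_cmult_left[OF hs])
    moreover have "(\<lambda>a. (q1 a + q2 a) * (1/2)) = m" by (auto simp: m_def fun_eq_iff)
    ultimately have "(m has_sum 1) UNIV" by simp
    moreover have "\<forall>a. 0 \<le> m a" using prob_le1(1)[OF p1] prob_le1(1)[OF p2] by (simp add: m_def)
    ultimately show ?thesis unfolding prob_dists_def by simp
  qed
  have I1: "gen_entropy h q1 \<noteq> \<infinity>" by (rule F_bounds(1)[OF g bdd v1])
  have I2: "gen_entropy h q2 \<noteq> \<infinity>" by (rule F_bounds(1)[OF g bdd v2])
  define g1 where "g1 = (\<lambda>a. h a (q1 a))"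
  define g2 where "g2 = (\<lambda>a. h a (q2 a))"
  define gm where "gm = (\<lambda>a. h a (m a))"
  have s1: "g1 summable_on UNIV" "gen_entropy h q1 = ereal (infsum g1 UNIV)"
    using entropy_real[OF g p1 I1] unfolding g1_def by auto
  have s2: "g2 summable_on UNIV" "gen_entropy h q2 = ereal (infsum g2 UNIV)"
    using entropy_real[OF g p2 I2] unfolding g2_def by auto
  obtain r1 where r1: "\<And>j. vterm H \<theta> q1 j = ereal (r1 j)"
    using F_bounds(2)[OF g bdd v1] by metis
  obtain r2 where r2: "\<And>j. vterm H \<theta> q2 j = ereal (r2 j)"
    using F_bounds(2)[OF g bdd v2] by metis
  have vm: "vterm H \<theta> m j = ereal ((r1 j + r2 j) / 2)" for j
  proof (cases "\<theta> $ j = 0")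
    case True
    then have "r1 j = 0" "r2 j = 0" using r1[of j] r2[of j] by (auto simp: vterm_def zero_ereal_def[symmetric])
    then show ?thesis using True by (simp add: vterm_def zero_ereal_def[symmetric])
  next
    case False
    have fin: "\<exists>s. pairing q (H j) = ereal s \<and> r = - (\<theta> $ j) * s"
      if "vterm H \<theta> q j = ereal r" for q r
    proof (cases "pairing q (H j)")
      case (real s) then show ?thesis using that False by (simp add: vterm_def)
    next
      case PInf then show ?thesis using that False by (simp add: vterm_def split: if_splits)
    next
      case MInf then show ?thesis using that False by (simp add: vterm_def split: if_splits)
    qed
    obtain t1 where t1: "pairing q1 (H j) = ereal t1" "r1 j = - (\<theta> $ j) * t1"
      using fin[OF r1[of j]] by blast
    obtain t2 where t2: "pairing q2 (H j) = ereal t2" "r2 j = - (\<theta> $ j) * t2"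
      using fin[OF r2[of j]] by blast
    have "pairing m (H j) = ereal ((t1 + t2) / 2)"
      unfolding m_def using pairing_mid[OF p1 p2 _ t1(1) t2(1)] bdd by auto
    then show ?thesis using t1 t2 by (simp add: vterm_def field_simps)
  qed
  have dm: "free_defined h H \<theta> m" unfolding free_defined_def using vm by simp
  have F1: "free_fun h H \<theta> q1 = ereal (infsum g1 UNIV + (\<Sum>j\<in>UNIV. r1 j))"
    unfolding free_fun_def s1(2) r1 by simp
  have F2: "free_fun h H \<theta> q2 = ereal (infsum g2 UNIV + (\<Sum>j\<in>UNIV. r2 j))"
    unfolding free_fun_def s2(2) r2 by simp
  have le1: "free_fun h H \<theta> m \<le> free_fun h H \<theta> q1" using v1 pm dm unfolding var_principle_def by blast
  have le2: "free_fun h H \<theta> m \<le> free_fun h H \<theta> q2" using v2 pm dm unfolding var_principle_def by blast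
  have Im: "gen_entropy h m \<noteq> \<infinity>"
  proof
    assume "gen_entropy h m = \<infinity>"
    then have "free_fun h H \<theta> m = \<infinity>" unfolding free_fun_def by simp
    then show False using le1 F1 by simp
  qed
  have sm: "gm summable_on UNIV" "gen_entropy h m = ereal (infsum gm UNIV)"
    using entropy_real[OF g pm Im] unfolding gm_def by auto
  have Fm: "free_fun h H \<theta> m = ereal (infsum gm UNIV + (\<Sum>j\<in>UNIV. (r1 j + r2 j) / 2))"
    unfolding free_fun_def sm(2) vm by simp
  have strict: "(infsum g1 UNIV + infsum g2 UNIV) / 2 < infsum gm UNIV"
  proof -
    have hs: "((\<lambda>a. (g1 a + g2 a) / 2) has_sum ((infsum g1 UNIV + infsum g2 UNIV) / 2)) UNIV"
    proof -
      have "((\<lambda>a. g1 a + g2 a) has_sum (infsum g1 UNIV + infsum g2 UNIV)) UNIV"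
        using s1(1) s2(1) by (intro has_sum_add) (auto intro: has_sum_infsum)
      from has_sum_cmult_left[OF this, of "1/2"] show ?thesis by simp
    qed
    show ?thesis
    proof (rule has_sum_strict_mono[OF hs])
      show "(gm has_sum infsum gm UNIV) UNIV" using sm(1) by (rule has_sum_infsum)
      show "(g1 x + g2 x) / 2 \<le> gm x" if "x \<in> UNIV" for x
        unfolding g1_def g2_def gm_def m_def
        by (rule h_mid[OF g]) (use prob_le1[OF p1] prob_le1[OF p2] in auto)
      show "a0 \<in> UNIV" by simp
      show "(g1 a0 + g2 a0) / 2 < gm a0"
        unfolding g1_def g2_def gm_def m_def
        by (rule h_mid_strict[OF g]) (use prob_le1[OF p1] prob_le1[OF p2] a0 in auto)
    qed
  qed
  have sd: "(\<Sum>j\<in>UNIV. (r1 j + r2 j) / 2) = ((\<Sum>j\<in>UNIV. r1 j) + (\<Sum>j\<in>UNIV. r2 j)) / 2"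
    unfolding sum_divide_distrib[symmetric] sum.distrib by simp
  have A1: "infsum gm UNIV + ((\<Sum>j\<in>UNIV. r1 j) + (\<Sum>j\<in>UNIV. r2 j)) / 2 \<le> infsum g1 UNIV + (\<Sum>j\<in>UNIV. r1 j)"
    using le1 unfolding F1 Fm sd by simp
  have A2: "infsum gm UNIV + ((\<Sum>j\<in>UNIV. r1 j) + (\<Sum>j\<in>UNIV. r2 j)) / 2 \<le> infsum g2 UNIV + (\<Sum>j\<in>UNIV. r2 j)"
    using le2 unfolding F2 Fm sd by simp
  show False using A1 A2 strict by argo
qed

lemma equil_vp:
  assumes g: "gen_entropy_fun h" and bdd: "\<forall>j. bdd_below (range (H j))"
    and t: "\<theta> \<in> param_domain h H"
  shows "var_principle h H \<theta> (equil h H \<theta>)"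
proof -
  obtain q where q: "var_principle h H \<theta> q" using t unfolding param_domain_def by blast
  show ?thesis unfolding equil_def
    by (rule theI[of _ q]) (use q var_unique[OF g bdd] in auto)
qed

lemma key:
  assumes p: "\<forall>j. pairing p (H j) = ereal (V $ j)"
  shows "free_defined h H \<theta> p" "free_fun h H \<theta> p = gen_entropy h p - ereal (\<theta> \<bullet> V)"
proof -
  have vt: "vterm H \<theta> p j = ereal (- (\<theta> $ j) * V $ j)" for j
    using p by (simp add: vterm_def)
  show "free_defined h H \<theta> p" unfolding free_defined_def vt by simp
  have "(\<Sum>j\<in>UNIV. vterm H \<theta> p j) = ereal (- (\<theta> \<bullet> V))"
    unfolding vt by (simp add: inner_vec_def sum_negf)
  then show "free_fun h H \<theta> p = gen_entropy h p - ereal (\<theta> \<bullet> V)"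
    unfolding free_fun_def by (cases "gen_entropy h p") auto
qed

lemma ereal_sub_le_add: "(x::ereal) - ereal c \<le> M \<Longrightarrow> x \<le> M + ereal c"
  by (cases x; cases M) auto

lemma ereal_add_le_sub: "(M::ereal) \<le> x - ereal c \<Longrightarrow> M + ereal c \<le> x"
  by (cases x; cases M) auto

theorem mainTheorem6:
  fixes h :: "'a::countable \<Rightarrow> real \<Rightarrow> real"
    and H :: "'n::finite \<Rightarrow> 'a \<Rightarrow> real"
    and U :: "real^'n"
  assumes "gen_entropy_fun h"
    and "\<forall>j. bdd_below (range (H j))"
    and "U \<in> S_dom h H"
  shows "thermo_entropy h H U = S_bar h H U"
proof -
  note g = assms(1) and bdd = assms(2)
  have le: "thermo_entropy h H U \<le> S_bar h H U"
    unfolding S_bar_def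
  proof (rule INF_greatest)
    fix \<theta> :: "real^'n"
    have "thermo_entropy h H U - ereal (\<theta> \<bullet> U) \<le> massieu h H \<theta>"
      unfolding massieu_def by (rule SUP_upper) (rule assms(3))
    then show "thermo_entropy h H U \<le> massieu h H \<theta> + ereal (\<theta> \<bullet> U)"
      by (rule ereal_sub_le_add)
  qed
  have rep: "\<And>V. V \<in> S_dom h H \<Longrightarrow> represents h H (SOME \<eta>. represents h H \<eta> V) V"
    unfolding S_dom_def by (auto intro: someI_ex)
  define \<eta>0 where "\<eta>0 = (SOME \<eta>. represents h H \<eta> U)"
  define q0 where "q0 = equil h H \<eta>0"
  have r0: "represents h H \<eta>0 U" unfolding \<eta>0_def by (rule rep[OF assms(3)])
  have vp0: "var_principle h H \<eta>0 q0"
    unfolding q0_def by (rule equil_vp[OF g bdd]) (use r0 in \<open>simp add: represents_def\<close>)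
  have pr0: "\<forall>j. pairing q0 (H j) = ereal (U $ j)" using r0 unfolding represents_def q0_def by simp
  have S0: "thermo_entropy h H U = gen_entropy h q0"
    unfolding thermo_entropy_def q0_def \<eta>0_def ..
  have "massieu h H \<eta>0 \<le> thermo_entropy h H U - ereal (\<eta>0 \<bullet> U)"
    unfolding massieu_def
  proof (rule SUP_least)
    fix V assume V: "V \<in> S_dom h H"
    define \<eta>' where "\<eta>' = (SOME \<eta>. represents h H \<eta> V)"
    define q' where "q' = equil h H \<eta>'"
    have r': "represents h H \<eta>' V" unfolding \<eta>'_def by (rule rep[OF V])
    have vp': "var_principle h H \<eta>' q'"
      unfolding q'_def by (rule equil_vp[OF g bdd]) (use r' in \<open>simp add: represents_def\<close>)
    have pr': "\<forall>j. pairing q' (H j) = ereal (V $ j)" using r' unfolding represents_def q'_def by simp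
    have S': "thermo_entropy h H V = gen_entropy h q'"
      unfolding thermo_entropy_def q'_def \<eta>'_def ..
    have pq': "q' \<in> prob_dists" using vp' unfolding var_principle_def by blast
    have "thermo_entropy h H V - ereal (\<eta>0 \<bullet> V) = free_fun h H \<eta>0 q'"
      unfolding S' key(2)[OF pr'] ..
    also have "\<dots> \<le> free_fun h H \<eta>0 q0"
      using vp0 pq' key(1)[OF pr'] unfolding var_principle_def by blast
    also have "\<dots> = thermo_entropy h H U - ereal (\<eta>0 \<bullet> U)"
      unfolding S0 key(2)[OF pr0] ..
    finally show "thermo_entropy h H V - ereal (\<eta>0 \<bullet> V) \<le> thermo_entropy h H U - ereal (\<eta>0 \<bullet> U)" .
  qed
  then have "massieu h H \<eta>0 + ereal (\<eta>0 \<bullet> U) \<le> thermo_entropy h H U" by (rule ereal_add_le_sub)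
  then have "S_bar h H U \<le> thermo_entropy h H U"
    unfolding S_bar_def by (rule order_trans[OF INF_lower[OF UNIV_I]])
  with le show ?thesis by (rule antisym)
qed

end
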